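(* Let $\Omega_0\subset\mathbb{C}$ be a simply connected domain and let $K_1=F_1+\overline{G_1}$ and $K_2=F_2+\overline{G_2}$ be two sense-preserving harmonic mappings in $\Omega_0$ (with $F_j,G_j$ analytic in $\Omega_0$), with dilatations $p_1=G_1'/F_1'$ and $p_2=G_2'/F_2'$ and Jacobians $\mathcal{J}_1=|F_1'|^2-|G_1'|^2$, $\mathcal{J}_2=|F_2'|^2-|G_2'|^2$. Then: (i) $S_H(K_1)$ is analytic in $\Omega_0$ if and only if $p_1$ is constant; (ii) if $G_1'=\lambda F_1'$ for some $\lambda\in\mathbb{C}$ and $\mathcal{J}_1=\mathcal{J}_2$, then there are constants $\alpha,\beta\in\mathbb{C}$ such that $F_2'=\alpha F_1'$ and $G_2'=\beta F_1'$, where $|\alpha|^2-|\beta|^2=1-|\lambda|^2>0$; (iii) if $G_1'=\lambda F_1'$ for some $\lambda\in\mathbb{C}$ and $S_H(K_1)=S_H(K_2)$, then $F_2'=(\mathcal{T}\circ F_1)'$ and $G_2'=c(\mathcal{T}\circ F_1)'$ for some constant $c\in\mathbb{C}$ with $|c|<1$ and some non-constant Möbius transformation $\mathcal{T}(z)=\frac{mz+n}{sz+d}$, $md-ns\neq 0$.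
   Context: A complex-valued harmonic mapping on a simply connected domain $\Omega_0$ has the form $K=F+\overline{G}$ with $F,G$ analytic. It is locally univalent iff its Jacobian $\mathcal{J}=|F'|^2-|G'|^2$ does not vanish, and sense-preserving if $\mathcal{J}>0$; its dilatation is $p=G'/F'$ (analytic, $|p|<1$ when sense-preserving). The pre-Schwarzian derivative of a locally univalent harmonic $K$ is $P_H(K)=\partial_z\log\mathcal{J}$, which for sense-preserving $K$ equals $\frac{F''}{F'}-\frac{p'\overline{p}}{1-|p|^2}$, and the Schwarzian derivative is $S_H(K)=\partial_z\big(P_H(K)\big)-\frac12\big(P_H(K)\big)^2$. For analytic locally univalent $F$, the classical Schwarzian is $S(F)=(F''/F')'-\frac12(F''/F')^2$. *)

theory Defs
  imports "HOL-Complex_Analysis.Complex_Analysis"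
begin

text \<open>Wirtinger derivative d/dz of a (real-)differentiable function of a complex variable:
  \<partial>_z f = (f_x - i f_y)/2, expressed via the Frechet derivative.\<close>
definition wirtinger_z :: "(complex \<Rightarrow> complex) \<Rightarrow> complex \<Rightarrow> complex" where
  "wirtinger_z f z =
     (frechet_derivative f (at z) 1 - \<i> * frechet_derivative f (at z) \<i>) / 2"

definition harm :: "(complex \<Rightarrow> complex) \<Rightarrow> (complex \<Rightarrow> complex) \<Rightarrow> complex \<Rightarrow> complex" where
  "harm F G z = F z + cnj (G z)"

definition jacobian_H :: "(complex \<Rightarrow> complex) \<Rightarrow> (complex \<Rightarrow> complex) \<Rightarrow> complex \<Rightarrow> real" where
  "jacobian_H F G z = (norm (deriv F z))^2 - (norm (deriv G z))^2"

definition dilatation :: "(complex \<Rightarrow> complex) \<Rightarrow> (complex \<Rightarrow> complex) \<Rightarrow> complex \<Rightarrow> complex" where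
  "dilatation F G z = deriv G z / deriv F z"

definition sense_preserving_harmonic ::
  "complex set \<Rightarrow> (complex \<Rightarrow> complex) \<Rightarrow> (complex \<Rightarrow> complex) \<Rightarrow> bool" where
  "sense_preserving_harmonic \<Omega> F G \<longleftrightarrow>
     F holomorphic_on \<Omega> \<and> G holomorphic_on \<Omega> \<and> (\<forall>z\<in>\<Omega>. jacobian_H F G z > 0)"

definition pre_schwarzian_H :: "(complex \<Rightarrow> complex) \<Rightarrow> (complex \<Rightarrow> complex) \<Rightarrow> complex \<Rightarrow> complex" where
  "pre_schwarzian_H F G z = wirtinger_z (\<lambda>w. complex_of_real (ln (jacobian_H F G w))) z"

definition schwarzian_H :: "(complex \<Rightarrow> complex) \<Rightarrow> (complex \<Rightarrow> complex) \<Rightarrow> complex \<Rightarrow> complex" where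
  "schwarzian_H F G z = wirtinger_z (pre_schwarzian_H F G) z - (pre_schwarzian_H F G z)^2 / 2"

definition moebius :: "complex \<Rightarrow> complex \<Rightarrow> complex \<Rightarrow> complex \<Rightarrow> complex \<Rightarrow> complex" where
  "moebius m n s d w = (m * w + n) / (s * w + d)"

end

theory Submission
  imports Defs
begin


definition RD :: "(complex \<Rightarrow> complex) \<Rightarrow> complex \<Rightarrow> complex \<Rightarrow> complex \<Rightarrow> bool" where
  "RD f z a b \<longleftrightarrow> (f has_derivative (\<lambda>h. a * h + b * cnj h)) (at z)"

lemma RD_eq: "RD f z a b \<Longrightarrow> a = a' \<Longrightarrow> b = b' \<Longrightarrow> RD f z a' b'" by simp

lemma RD_hol: "(f has_field_derivative f') (at z) \<Longrightarrow> RD f z f' 0"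
  unfolding RD_def has_field_derivative_def by simp

lemma RD_cnj: "(f has_field_derivative f') (at z) \<Longrightarrow> RD (\<lambda>w. cnj (f w)) z 0 (cnj f')"
  unfolding RD_def has_field_derivative_def
  by (rule has_derivative_eq_rhs, rule has_derivative_cnj, assumption) (auto simp: mult.commute)

lemma RD_const: "RD (\<lambda>w. c) z 0 0"
  unfolding RD_def by simp

lemma RD_id: "RD (\<lambda>w. w) z 1 0"
  unfolding RD_def by simp

lemma RD_add: assumes "RD f z a b" "RD g z c d" shows "RD (\<lambda>w. f w + g w) z (a + c) (b + d)"
proof -
  have "((\<lambda>w. f w + g w) has_derivative (\<lambda>h. (a*h + b*cnj h) + (c*h + d*cnj h))) (at z)"
    by (rule has_derivative_add) (use assms in \<open>auto simp: RD_def\<close>)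
  thus ?thesis unfolding RD_def by (simp add: algebra_simps)
qed

lemma RD_diff: assumes "RD f z a b" "RD g z c d" shows "RD (\<lambda>w. f w - g w) z (a - c) (b - d)"
  using assms unfolding RD_def by (intro has_derivative_eq_rhs[OF has_derivative_diff]) (auto simp: algebra_simps)

lemma RD_mult: assumes "RD f z a b" "RD g z c d" shows
   "RD (\<lambda>w. f w * g w) z (f z * c + a * g z) (f z * d + b * g z)"
  using assms unfolding RD_def by (intro has_derivative_eq_rhs[OF has_derivative_mult]) (auto simp: algebra_simps)

lemma RD_cmult: "RD f z a b \<Longrightarrow> RD (\<lambda>w. k * f w) z (k * a) (k * b)"
  using RD_mult[OF RD_const[of k z], of f a b] by simp

lemma RD_comp: assumes "RD f z a b" "(h has_field_derivative h') (at (f z))" shows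
   "RD (\<lambda>w. h (f w)) z (h' * a) (h' * b)"
proof -
  have "((\<lambda>w. h (f w)) has_derivative (\<lambda>x. h' * (a * x + b * cnj x))) (at z)"
    using has_derivative_compose[of f "\<lambda>h. a * h + b * cnj h" z UNIV h "(*) h'"] assms
    unfolding RD_def has_field_derivative_def by simp
  thus ?thesis unfolding RD_def by (simp add: distrib_left mult.assoc)
qed

lemma RD_inverse: assumes "RD f z a b" "f z \<noteq> 0" shows
   "RD (\<lambda>w. inverse (f w)) z (- a / (f z)^2) (- b / (f z)^2)"
proof -
  have "(inverse has_field_derivative - (inverse (f z) ^ 2)) (at (f z))"
    using assms(2) DERIV_inverse[of "f z" UNIV] by (simp add: power2_eq_square)
  from RD_comp[OF assms(1) this] show ?thesis
    by (rule RD_eq) (simp_all add: power_inverse divide_inverse)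
qed

lemma RD_divide: assumes "RD f z a b" "RD g z c d" "g z \<noteq> 0" shows
   "RD (\<lambda>w. f w / g w) z ((a * g z - f z * c) / (g z)^2) ((b * g z - f z * d) / (g z)^2)"
proof -
  have "RD (\<lambda>w. f w * inverse (g w)) z (f z * (- c / (g z)^2) + a * inverse (g z)) (f z * (- d / (g z)^2) + b * inverse (g z))"
    by (rule RD_mult[OF assms(1) RD_inverse[OF assms(2,3)]])
  moreover have "f z * (- c / (g z)^2) + a * inverse (g z) = (a * g z - f z * c) / (g z)^2"
    using assms(3) by (simp add: field_simps power2_eq_square)
  moreover have "f z * (- d / (g z)^2) + b * inverse (g z) = (b * g z - f z * d) / (g z)^2"
    using assms(3) by (simp add: field_simps power2_eq_square)
  ultimately show ?thesis by (simp add: divide_inverse)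
qed

lemma RD_power2: "RD f z a b \<Longrightarrow> RD (\<lambda>w. (f w)^2) z (2 * f z * a) (2 * f z * b)"
  unfolding power2_eq_square by (rule RD_eq, rule RD_mult) (auto simp: algebra_simps)

lemma RD_transform: "RD f z a b \<Longrightarrow> open S \<Longrightarrow> z \<in> S \<Longrightarrow> (\<And>w. w \<in> S \<Longrightarrow> f w = g w) \<Longrightarrow> RD g z a b"
  unfolding RD_def by (rule has_derivative_transform_within_open)

lemma RD_unique: "RD f z a b \<Longrightarrow> RD f z c d \<Longrightarrow> a = c \<and> b = d"
proof -
  assume 1: "RD f z a b" and 2: "RD f z c d"
  have e: "(\<lambda>h. a * h + b * cnj h) = (\<lambda>h. c * h + d * cnj h)"
    using 1 2 unfolding RD_def by (rule has_derivative_unique)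
  have x1: "a + b = c + d" using fun_cong[OF e, of 1] by simp
  have x2: "(a - b) * \<i> = (c - d) * \<i>" using fun_cong[OF e, of \<i>] by (simp add: algebra_simps)
  hence x3: "a - b = c - d" by simp
  have "a = ((a+b)+(a-b))/2" by (simp add: field_simps)
  also have "\<dots> = ((c+d)+(c-d))/2" using x1 x3 by simp
  also have "\<dots> = c" by (simp add: field_simps)
  finally have "a = c" .
  with x1 show ?thesis by simp
qed

lemma RD_field: "RD f z a b \<Longrightarrow> (f has_field_derivative f') (at z) \<Longrightarrow> b = 0"
  using RD_unique RD_hol by blast

lemma RD_wirtinger: "RD f z a b \<Longrightarrow> wirtinger_z f z = a"
  unfolding wirtinger_z_def RD_def
proof -
  assume "(f has_derivative (\<lambda>h. a * h + b * cnj h)) (at z)"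
  hence "frechet_derivative f (at z) = (\<lambda>h. a * h + b * cnj h)" by (metis frechet_derivative_at)
  thus "(frechet_derivative f (at z) 1 - \<i> * frechet_derivative f (at z) \<i>) / 2 = a"
    by (simp add: algebra_simps)
qed

lemma wirtinger_cong: "open S \<Longrightarrow> z \<in> S \<Longrightarrow> (\<And>w. w \<in> S \<Longrightarrow> f w = g w) \<Longrightarrow> wirtinger_z f z = wirtinger_z g z"
proof -
  assume S: "open S" "z \<in> S" "\<And>w. w \<in> S \<Longrightarrow> f w = g w"
  have "\<And>D. (f has_derivative D) (at z) \<longleftrightarrow> (g has_derivative D) (at z)"
    using S by (metis has_derivative_transform_within_open)
  hence "frechet_derivative f (at z) = frechet_derivative g (at z)"
    unfolding frechet_derivative_def by simp
  thus ?thesis unfolding wirtinger_z_def by simp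
qed



lemma deriv_local: "open S \<Longrightarrow> z \<in> S \<Longrightarrow> (\<And>w. w \<in> S \<Longrightarrow> f w = g w) \<Longrightarrow> deriv f z = deriv g z"
proof -
  assume a: "open S" "z \<in> S" "\<And>w. w \<in> S \<Longrightarrow> f w = g w"
  have "eventually (\<lambda>w. w \<in> S) (nhds z)" by (rule eventually_nhds_in_open) (use a in auto)
  hence "eventually (\<lambda>w. f w = g w) (nhds z)" by (rule eventually_mono) (use a in auto)
  thus ?thesis by (rule deriv_cong_ev) simp
qed

lemma RD_hcnj: "(A has_field_derivative A') (at z) \<Longrightarrow> (B has_field_derivative B') (at z) \<Longrightarrow>
  RD (\<lambda>w. A w * cnj (B w)) z (A' * cnj (B z)) (A z * cnj B')"
  by (rule RD_eq, rule RD_mult, erule RD_hol, erule RD_cnj) auto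

definition Jc :: "(complex \<Rightarrow> complex) \<Rightarrow> (complex \<Rightarrow> complex) \<Rightarrow> complex \<Rightarrow> complex" where
  "Jc F G w = deriv F w * cnj (deriv F w) - deriv G w * cnj (deriv G w)"
definition Nf :: "(complex \<Rightarrow> complex) \<Rightarrow> (complex \<Rightarrow> complex) \<Rightarrow> complex \<Rightarrow> complex" where
  "Nf F G w = deriv (deriv F) w * cnj (deriv F w) - deriv (deriv G) w * cnj (deriv G w)"
definition N1 :: "(complex \<Rightarrow> complex) \<Rightarrow> (complex \<Rightarrow> complex) \<Rightarrow> complex \<Rightarrow> complex" where
  "N1 F G w = deriv (deriv (deriv F)) w * cnj (deriv F w) - deriv (deriv (deriv G)) w * cnj (deriv G w)"

locale sph =
  fixes \<Omega> :: "complex set" and F G :: "complex \<Rightarrow> complex"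
  assumes op: "open \<Omega>" and sp: "sense_preserving_harmonic \<Omega> F G"
begin

lemma holF: "F holomorphic_on \<Omega>" and holG: "G holomorphic_on \<Omega>" and Jpos: "\<And>z. z \<in> \<Omega> \<Longrightarrow> jacobian_H F G z > 0"
  using sp unfolding sense_preserving_harmonic_def by auto

lemma hol1: "deriv F holomorphic_on \<Omega>" "deriv G holomorphic_on \<Omega>"
  using holF holG op by (auto intro: holomorphic_deriv)
lemma hol2: "deriv (deriv F) holomorphic_on \<Omega>" "deriv (deriv G) holomorphic_on \<Omega>"
  using hol1 op by (auto intro: holomorphic_deriv)
lemma hol3: "deriv (deriv (deriv F)) holomorphic_on \<Omega>" "deriv (deriv (deriv G)) holomorphic_on \<Omega>"
  using hol2 op by (auto intro: holomorphic_deriv)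
lemma hol4: "deriv (deriv (deriv (deriv F))) holomorphic_on \<Omega>" "deriv (deriv (deriv (deriv G))) holomorphic_on \<Omega>"
  using hol3 op by (auto intro: holomorphic_deriv)

lemma D0: "z \<in> \<Omega> \<Longrightarrow> (F has_field_derivative deriv F z) (at z)" "z \<in> \<Omega> \<Longrightarrow> (G has_field_derivative deriv G z) (at z)"
  using holF holG op by (auto intro: holomorphic_derivI)
lemma D1: "z \<in> \<Omega> \<Longrightarrow> (deriv F has_field_derivative deriv (deriv F) z) (at z)"
   "z \<in> \<Omega> \<Longrightarrow> (deriv G has_field_derivative deriv (deriv G) z) (at z)"
  using hol1 op by (auto intro: holomorphic_derivI)
lemma D2: "z \<in> \<Omega> \<Longrightarrow> (deriv (deriv F) has_field_derivative deriv (deriv (deriv F)) z) (at z)"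
   "z \<in> \<Omega> \<Longrightarrow> (deriv (deriv G) has_field_derivative deriv (deriv (deriv G)) z) (at z)"
  using hol2 op by (auto intro: holomorphic_derivI)
lemma D3: "z \<in> \<Omega> \<Longrightarrow> (deriv (deriv (deriv F)) has_field_derivative deriv (deriv (deriv (deriv F))) z) (at z)"
   "z \<in> \<Omega> \<Longrightarrow> (deriv (deriv (deriv G)) has_field_derivative deriv (deriv (deriv (deriv G))) z) (at z)"
  using hol3 op by (auto intro: holomorphic_derivI)

lemma Jc_real: "Jc F G w = complex_of_real (jacobian_H F G w)"
  unfolding Jc_def jacobian_H_def by (simp flip: complex_norm_square)

lemma Jc_nz: "z \<in> \<Omega> \<Longrightarrow> Jc F G z \<noteq> 0"
  using Jpos[of z] by (simp add: Jc_real)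

lemma F1_nz: "z \<in> \<Omega> \<Longrightarrow> deriv F z \<noteq> 0"
proof
  assume z: "z \<in> \<Omega>" and "deriv F z = 0"
  hence "jacobian_H F G z \<le> 0" unfolding jacobian_H_def by simp
  with Jpos[OF z] show False by simp
qed

lemma PRE: assumes z: "z \<in> \<Omega>" shows "pre_schwarzian_H F G z = Nf F G z / Jc F G z"
proof -
  have "pre_schwarzian_H F G z = wirtinger_z (\<lambda>w. Ln (Jc F G w)) z"
    unfolding pre_schwarzian_H_def
    by (rule wirtinger_cong[OF op z]) (simp add: Jc_real Ln_of_real Jpos)
  moreover have r: "RD (\<lambda>w. Jc F G w) z (Nf F G z) (deriv F z * cnj (deriv (deriv F) z) - deriv G z * cnj (deriv (deriv G) z))"
    unfolding Jc_def Nf_def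
    by (rule RD_diff[OF RD_hcnj RD_hcnj]) (use z D0 D1 in auto)
  moreover have l: "(Ln has_field_derivative inverse (Jc F G z)) (at (Jc F G z))"
    by (rule has_field_derivative_Ln) (use Jpos[OF z] in \<open>auto simp: Jc_real\<close>)
  have "wirtinger_z (\<lambda>w. Ln (Jc F G w)) z = inverse (Jc F G z) * Nf F G z"
    by (rule RD_wirtinger[OF RD_comp[OF r l]])
  ultimately show ?thesis by (simp add: divide_inverse mult.commute)
qed

lemma SCH: assumes z: "z \<in> \<Omega>" shows "schwarzian_H F G z =
  (N1 F G z * Jc F G z - Nf F G z * Nf F G z) / (Jc F G z)^2 - (Nf F G z / Jc F G z)^2 / 2"
proof -
  have "wirtinger_z (pre_schwarzian_H F G) z = wirtinger_z (\<lambda>w. Nf F G w / Jc F G w) z"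
    by (rule wirtinger_cong[OF op z]) (simp add: PRE)
  moreover have r1: "RD (\<lambda>w. Jc F G w) z (Nf F G z) (deriv F z * cnj (deriv (deriv F) z) - deriv G z * cnj (deriv (deriv G) z))"
    unfolding Jc_def Nf_def
    by (rule RD_diff[OF RD_hcnj RD_hcnj]) (use z D0 D1 in auto)
  moreover have r2: "RD (\<lambda>w. Nf F G w) z (N1 F G z) (deriv (deriv F) z * cnj (deriv (deriv F) z) - deriv (deriv G) z * cnj (deriv (deriv G) z))"
    unfolding N1_def Nf_def
    by (rule RD_diff[OF RD_hcnj RD_hcnj]) (use z D1 D2 in auto)
  have "wirtinger_z (\<lambda>w. Nf F G w / Jc F G w) z = (N1 F G z * Jc F G z - Nf F G z * Nf F G z) / (Jc F G z)^2"
    by (rule RD_wirtinger[OF RD_divide[OF r2 r1 Jc_nz[OF z]]])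
  ultimately show ?thesis unfolding schwarzian_H_def using PRE[OF z] by simp
qed

end


lemma alg_pre: fixes f1 f2 c1 p q P1 :: complex
  assumes "f1 \<noteq> 0" "c1 \<noteq> 0" "1 - p*q \<noteq> 0"
  shows "(f2*c1 - (P1*f1 + p*f2)*(q*c1)) / (f1*c1 - (p*f1)*(q*c1)) = f2/f1 - P1*(q/(1 - p*q))"
proof -
  have "f1*c1 - (p*f1)*(q*c1) = f1*c1*(1-p*q)" by (simp add: algebra_simps)
  moreover have "f1*c1*(1-p*q) \<noteq> 0" using assms by simp
  ultimately show ?thesis using assms by (simp add: field_simps)
qed

lemma alg_sch: fixes f1 f2 f3 c1 p q P1 P2 :: complex
  assumes "f1 \<noteq> 0" "c1 \<noteq> 0" "1 - p*q \<noteq> 0"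
  defines "J \<equiv> f1*c1 - (p*f1)*(q*c1)"
  defines "N \<equiv> f2*c1 - (P1*f1 + p*f2)*(q*c1)"
  defines "M \<equiv> f3*c1 - (P2*f1 + 2*P1*f2 + p*f3)*(q*c1)"
  shows "(M * J - N * N) / J^2 - (N/J)^2/2 =
     (f3/f1 - 3/2*(f2/f1)^2) + (q/(1-p*q)) * (P1*f2/f1 - P2) + (q/(1-p*q))^2 * (-3/2*P1^2)"
proof -
  define u where "u = q/(1-p*q)"
  have J: "J = f1*c1*(1-p*q)" unfolding J_def by (simp add: algebra_simps)
  have Jn: "J \<noteq> 0" unfolding J using assms by simp
  have NJ: "N/J = f2/f1 - P1*u" unfolding J N_def u_def using assms by (simp add: field_simps)
  have MJ: "M/J = f3/f1 - (P2 + 2*P1*(f2/f1))*u" unfolding J M_def u_def using assms by (simp add: field_simps)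
  have "(M * J - N * N) / J^2 - (N/J)^2/2 = M/J - 3/2*(N/J)^2"
    using Jn by (simp add: field_simps power2_eq_square)
  also have "\<dots> = (f3/f1 - 3/2*(f2/f1)^2) + u * (P1*f2/f1 - P2) + u^2 * (-3/2*P1^2)"
    unfolding NJ MJ by (simp add: algebra_simps power2_eq_square)
  finally show ?thesis unfolding u_def .
qed


definition uu :: "(complex \<Rightarrow> complex) \<Rightarrow> complex \<Rightarrow> complex" where
  "uu p w = cnj (p w) / (1 - p w * cnj (p w))"

lemma q_nz: "norm (x::complex) < 1 \<Longrightarrow> 1 - x * cnj x \<noteq> 0"
proof
  assume "norm x < 1" "1 - x * cnj x = 0"
  hence "complex_of_real ((norm x)^2) = 1" by (simp flip: complex_norm_square)
  hence "(norm x)^2 = 1" using of_real_eq_1_iff by blast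
  moreover have "(norm x)^2 < 1^2" by (rule power_strict_mono) (use \<open>norm x < 1\<close> in auto)
  ultimately show False by simp
qed

lemma RD_uu: assumes "(p has_field_derivative P1) (at z)" "norm (p z) < 1"
  shows "\<exists>a. RD (uu p) z a (cnj P1 / (1 - p z * cnj (p z))^2)"
proof -
  have q: "1 - p z * cnj (p z) \<noteq> 0" using q_nz assms(2) by blast
  have r1: "RD (\<lambda>w. cnj (p w)) z 0 (cnj P1)" by (rule RD_cnj[OF assms(1)])
  have r2: "RD (\<lambda>w. 1 - p w * cnj (p w)) z (0 - (p z * 0 + P1 * cnj (p z))) (0 - (p z * cnj P1 + 0 * cnj (p z)))"
    by (rule RD_diff[OF RD_const RD_mult[OF RD_hol[OF assms(1)] r1]])
  have r3: "RD (uu p) z ((0 * (1 - p z * cnj (p z)) - cnj (p z) * (0 - (p z * 0 + P1 * cnj (p z)))) / (1 - p z * cnj (p z))^2)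
     ((cnj P1 * (1 - p z * cnj (p z)) - cnj (p z) * (0 - (p z * cnj P1 + 0 * cnj (p z)))) / (1 - p z * cnj (p z))^2)"
    using RD_divide[OF r1 r2 q] unfolding uu_def[abs_def] .
  have e: "cnj P1 * (1 - p z * cnj (p z)) - cnj (p z) * (0 - (p z * cnj P1 + 0 * cnj (p z))) = cnj P1"
    by (simp add: algebra_simps)
  show ?thesis using r3 unfolding e by blast
qed

lemma nothol:
  assumes U: "open U" "z0 \<in> U" and ph: "p holomorphic_on U" and pl: "\<And>w. w \<in> U \<Longrightarrow> norm (p w) < 1"
    and p1: "deriv p z0 \<noteq> 0" and gh: "g holomorphic_on U" and eq: "\<And>w. w \<in> U \<Longrightarrow> uu p w = g w"
  shows False
proof -
  have pd: "(p has_field_derivative deriv p z0) (at z0)" using ph U by (auto intro: holomorphic_derivI)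
  obtain a where r: "RD (uu p) z0 a (cnj (deriv p z0) / (1 - p z0 * cnj (p z0))^2)"
    using RD_uu[OF pd pl[OF U(2)]] by blast
  have "(g has_field_derivative deriv g z0) (at z0)" using gh U by (auto intro: holomorphic_derivI)
  hence "(uu p has_field_derivative deriv g z0) (at z0)"
    by (rule has_field_derivative_transform_within_open[OF _ U]) (simp add: eq)
  from RD_field[OF r this] have "cnj (deriv p z0) / (1 - p z0 * cnj (p z0))^2 = 0" .
  with q_nz[OF pl[OF U(2)]] p1 show False by simp
qed

context sph begin

abbreviation "pp \<equiv> dilatation F G"

lemma p_hol: "dilatation F G holomorphic_on \<Omega>"
proof -
  have "(\<lambda>w. deriv G w / deriv F w) holomorphic_on \<Omega>"
    using hol1 F1_nz by (auto intro!: holomorphic_intros)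
  thus ?thesis by (rule holomorphic_transform) (simp add: dilatation_def)
qed
lemma p1_hol: "deriv (dilatation F G) holomorphic_on \<Omega>" using p_hol op by (rule holomorphic_deriv)
lemma p2_hol: "deriv (deriv (dilatation F G)) holomorphic_on \<Omega>" using p1_hol op by (rule holomorphic_deriv)
lemma Dp0: "z \<in> \<Omega> \<Longrightarrow> (pp has_field_derivative deriv pp z) (at z)"
  using p_hol op by (auto intro: holomorphic_derivI)
lemma Dp1: "z \<in> \<Omega> \<Longrightarrow> (deriv pp has_field_derivative deriv (deriv pp) z) (at z)"
  using p1_hol op by (auto intro: holomorphic_derivI)

lemma p_lt1: assumes z: "z \<in> \<Omega>" shows "norm (pp z) < 1"
proof -
  have "(norm (deriv G z))^2 < (norm (deriv F z))^2" using Jpos[OF z] unfolding jacobian_H_def by simp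
  hence "norm (deriv G z) < norm (deriv F z)" using power2_less_imp_less by fastforce
  thus ?thesis using F1_nz[OF z] by (simp add: dilatation_def norm_divide divide_less_eq)
qed

lemma G1: "z \<in> \<Omega> \<Longrightarrow> deriv G z = pp z * deriv F z"
  using F1_nz by (simp add: dilatation_def)

lemma G2: assumes z: "z \<in> \<Omega>" shows "deriv (deriv G) z = deriv pp z * deriv F z + pp z * deriv (deriv F) z"
proof -
  have "deriv (deriv G) z = deriv (\<lambda>w. pp w * deriv F w) z"
    by (rule deriv_local[OF op z]) (simp add: G1)
  also have "\<dots> = deriv pp z * deriv F z + deriv (deriv F) z * pp z"
    by (rule DERIV_imp_deriv, rule DERIV_mult[OF Dp0[OF z] D1(1)[OF z]])
  finally show ?thesis by simp
qed

lemma G3: assumes z: "z \<in> \<Omega>" shows "deriv (deriv (deriv G)) z =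
   deriv (deriv pp) z * deriv F z + 2 * deriv pp z * deriv (deriv F) z + pp z * deriv (deriv (deriv F)) z"
proof -
  have "deriv (deriv (deriv G)) z = deriv (\<lambda>w. deriv pp w * deriv F w + pp w * deriv (deriv F) w) z"
    by (rule deriv_local[OF op z]) (simp add: G2)
  also have "\<dots> = (deriv (deriv pp) z * deriv F z + deriv (deriv F) z * deriv pp z) +
      (deriv pp z * deriv (deriv F) z + deriv (deriv (deriv F)) z * pp z)"
    by (rule DERIV_imp_deriv, rule DERIV_add, rule DERIV_mult[OF Dp1[OF z] D1(1)[OF z]],
        rule DERIV_mult[OF Dp0[OF z] D2(1)[OF z]])
  finally show ?thesis by (simp add: algebra_simps)
qed

lemma PREp: assumes z: "z \<in> \<Omega>" shows
  "pre_schwarzian_H F G z = deriv (deriv F) z / deriv F z - deriv pp z * uu pp z"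
proof -
  have "pre_schwarzian_H F G z = Nf F G z / Jc F G z" by (rule PRE[OF z])
  also have "\<dots> = deriv (deriv F) z / deriv F z - deriv pp z * (cnj (pp z) / (1 - pp z * cnj (pp z)))"
    unfolding Nf_def Jc_def G1[OF z] G2[OF z] complex_cnj_mult
    by (rule alg_pre) (use F1_nz[OF z] q_nz[OF p_lt1[OF z]] in auto)
  finally show ?thesis by (simp add: uu_def)
qed

lemma SCHp: assumes z: "z \<in> \<Omega>" shows
  "schwarzian_H F G z = (deriv (deriv (deriv F)) z / deriv F z - 3/2 * (deriv (deriv F) z / deriv F z)^2)
     + uu pp z * (deriv pp z * deriv (deriv F) z / deriv F z - deriv (deriv pp) z)
     + (uu pp z)^2 * (-3/2 * (deriv pp z)^2)"
proof -
  have "schwarzian_H F G z = (N1 F G z * Jc F G z - Nf F G z * Nf F G z) / (Jc F G z)^2 - (Nf F G z / Jc F G z)^2 / 2"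
    by (rule SCH[OF z])
  also have "\<dots> = (deriv (deriv (deriv F)) z / deriv F z - 3/2 * (deriv (deriv F) z / deriv F z)^2)
     + (cnj (pp z) / (1 - pp z * cnj (pp z))) * (deriv pp z * deriv (deriv F) z / deriv F z - deriv (deriv pp) z)
     + (cnj (pp z) / (1 - pp z * cnj (pp z)))^2 * (-3/2 * (deriv pp z)^2)"
    unfolding N1_def Nf_def Jc_def G1[OF z] G2[OF z] G3[OF z] complex_cnj_mult
    by (rule alg_sch) (use F1_nz[OF z] q_nz[OF p_lt1[OF z]] in auto)
  finally show ?thesis by (simp add: uu_def)
qed

end



context sph begin

lemma const_dil: assumes c: "\<And>z. z \<in> \<Omega> \<Longrightarrow> pp z = c" and z: "z \<in> \<Omega>"
  shows "deriv pp z = 0" "deriv (deriv pp) z = 0"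
proof -
  have d1: "deriv pp w = 0" if "w \<in> \<Omega>" for w
  proof -
    have "deriv pp w = deriv (\<lambda>_. c) w" by (rule deriv_local[OF op that]) (simp add: c)
    thus ?thesis by simp
  qed
  show "deriv pp z = 0" by (rule d1[OF z])
  have "deriv (deriv pp) z = deriv (\<lambda>_. 0) z" by (rule deriv_local[OF op z]) (simp add: d1)
  thus "deriv (deriv pp) z = 0" by simp
qed

definition A0f where "A0f w = deriv (deriv (deriv F)) w / deriv F w - 3/2 * (deriv (deriv F) w / deriv F w)^2"

lemma A0_hol: "A0f holomorphic_on \<Omega>"
proof -
  have "(\<lambda>w. deriv (deriv (deriv F)) w / deriv F w - 3/2 * (deriv (deriv F) w / deriv F w)^2) holomorphic_on \<Omega>"
    using hol1 hol2 hol3 F1_nz by (auto intro!: holomorphic_intros)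
  thus ?thesis unfolding A0f_def[abs_def] .
qed

lemma const_S: assumes c: "\<And>z. z \<in> \<Omega> \<Longrightarrow> pp z = c" and z: "z \<in> \<Omega>"
  shows "schwarzian_H F G z = A0f z"
  using SCHp[OF z] const_dil[OF c z] unfolding A0f_def by simp

lemma const_P: assumes c: "\<And>z. z \<in> \<Omega> \<Longrightarrow> pp z = c" and z: "z \<in> \<Omega>"
  shows "pre_schwarzian_H F G z = deriv (deriv F) z / deriv F z"
  using PREp[OF z] const_dil[OF c z] by simp

lemma part1b: assumes c: "\<And>z. z \<in> \<Omega> \<Longrightarrow> pp z = c" shows "schwarzian_H F G holomorphic_on \<Omega>"
  using A0_hol by (rule holomorphic_transform) (simp add: const_S[OF c])

lemma zero_deriv_const: assumes "connected \<Omega>" "\<And>z. z \<in> \<Omega> \<Longrightarrow> deriv pp z = 0"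
  shows "\<exists>c. \<forall>z\<in>\<Omega>. pp z = c"
proof -
  have "continuous_on \<Omega> pp" using p_hol by (rule holomorphic_on_imp_continuous_on)
  moreover have "\<forall>x\<in>\<Omega> - {}. DERIV pp x :> 0" using Dp0 assms(2) by fastforce
  ultimately obtain c where "\<And>x. x \<in> \<Omega> \<Longrightarrow> pp x = c"
    using DERIV_zero_connected_constant[OF assms(1) op finite.emptyI] by blast
  thus ?thesis by blast
qed

lemma open_nz: "open (\<Omega> \<inter> {w. deriv pp w \<noteq> 0})"
proof -
  have "continuous_on \<Omega> (deriv pp)" using p1_hol by (rule holomorphic_on_imp_continuous_on)
  hence "open (\<Omega> \<inter> deriv pp -` (- {0}))" using op by (intro continuous_open_preimage) auto
  moreover have "\<Omega> \<inter> deriv pp -` (- {0}) = \<Omega> \<inter> {w. deriv pp w \<noteq> 0}" by auto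
  ultimately show ?thesis by simp
qed

lemma deriv_zero_by_nothol:
  assumes g: "g holomorphic_on (\<Omega> \<inter> {w. deriv pp w \<noteq> 0})"
    and eq: "\<And>w. w \<in> \<Omega> \<Longrightarrow> deriv pp w \<noteq> 0 \<Longrightarrow> uu pp w = g w"
    and z: "z \<in> \<Omega>"
  shows "deriv pp z = 0"
proof (rule ccontr)
  assume nz: "deriv pp z \<noteq> 0"
  show False
  proof (rule nothol[OF open_nz _ _ _ _ g])
    show "z \<in> \<Omega> \<inter> {w. deriv pp w \<noteq> 0}" using z nz by auto
    show "pp holomorphic_on \<Omega> \<inter> {w. deriv pp w \<noteq> 0}" using p_hol by (rule holomorphic_on_subset) auto
    show "\<And>w. w \<in> \<Omega> \<inter> {w. deriv pp w \<noteq> 0} \<Longrightarrow> norm (pp w) < 1" using p_lt1 by auto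
    show "deriv pp z \<noteq> 0" by (rule nz)
    show "\<And>w. w \<in> \<Omega> \<inter> {w. deriv pp w \<noteq> 0} \<Longrightarrow> uu pp w = g w" using eq by auto
  qed
qed

definition A1f where "A1f w = deriv pp w * deriv (deriv F) w / deriv F w - deriv (deriv pp) w"
definition A2f where "A2f w = -3/2 * (deriv pp w)^2"

lemma A1_hol: "A1f holomorphic_on \<Omega>"
proof -
  have "(\<lambda>w. deriv pp w * deriv (deriv F) w / deriv F w - deriv (deriv pp) w) holomorphic_on \<Omega>"
    using hol1 hol2 p1_hol p2_hol F1_nz by (auto intro!: holomorphic_intros)
  thus ?thesis unfolding A1f_def[abs_def] .
qed
lemma A2_hol: "A2f holomorphic_on \<Omega>"
proof -
  have "(\<lambda>w. -3/2 * (deriv pp w)^2) holomorphic_on \<Omega>"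
    using p1_hol by (auto intro!: holomorphic_intros)
  thus ?thesis unfolding A2f_def[abs_def] .
qed

lemma part1a: assumes conn: "connected \<Omega>" and h: "schwarzian_H F G holomorphic_on \<Omega>"
  shows "\<exists>c. \<forall>z\<in>\<Omega>. pp z = c"
proof -
  have key: "A1f w + 2 * uu pp w * A2f w = 0" if w: "w \<in> \<Omega>" and nz: "deriv pp w \<noteq> 0" for w
  proof -
    obtain au where ru: "RD (uu pp) w au (cnj (deriv pp w) / (1 - pp w * cnj (pp w))^2)"
      using RD_uu[OF Dp0[OF w] p_lt1[OF w]] by blast
    define \<beta> where "\<beta> = cnj (deriv pp w) / (1 - pp w * cnj (pp w))^2"
    have h0: "(A0f has_field_derivative deriv A0f w) (at w)" using A0_hol op w by (auto intro: holomorphic_derivI)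
    have h1: "(A1f has_field_derivative deriv A1f w) (at w)" using A1_hol op w by (auto intro: holomorphic_derivI)
    have h2: "(A2f has_field_derivative deriv A2f w) (at w)" using A2_hol op w by (auto intro: holomorphic_derivI)
    note r = RD_add[OF RD_add[OF RD_hol[OF h0] RD_mult[OF ru RD_hol[OF h1]]] RD_mult[OF RD_power2[OF ru] RD_hol[OF h2]]]
    have e: "A0f v + uu pp v * A1f v + (uu pp v)^2 * A2f v = schwarzian_H F G v" if "v \<in> \<Omega>" for v
      using SCHp[OF that] unfolding A0f_def A1f_def A2f_def by simp
    note r2 = RD_transform[OF r op w e]
    have "(schwarzian_H F G has_field_derivative deriv (schwarzian_H F G) w) (at w)"
      using h op w by (auto intro: holomorphic_derivI)
    from RD_field[OF r2 this, folded \<beta>_def] have "\<beta> * (A1f w + 2 * uu pp w * A2f w) = 0" by (simp add: algebra_simps)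
    moreover have "\<beta> \<noteq> 0" unfolding \<beta>_def using nz q_nz[OF p_lt1[OF w]] by simp
    ultimately show ?thesis by simp
  qed
  have "deriv pp z = 0" if z: "z \<in> \<Omega>" for z
  proof (rule deriv_zero_by_nothol[OF _ _ z])
    show "(\<lambda>w. A1f w / (3 * (deriv pp w)^2)) holomorphic_on \<Omega> \<inter> {w. deriv pp w \<noteq> 0}"
    proof -
      have a: "A1f holomorphic_on \<Omega> \<inter> {w. deriv pp w \<noteq> 0}" using A1_hol by (rule holomorphic_on_subset) auto
      have b: "deriv pp holomorphic_on \<Omega> \<inter> {w. deriv pp w \<noteq> 0}" using p1_hol by (rule holomorphic_on_subset) auto
      have c: "(\<lambda>w. 3 * (deriv pp w)^2) holomorphic_on \<Omega> \<inter> {w. deriv pp w \<noteq> 0}"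
        using holomorphic_on_mult[OF holomorphic_on_const holomorphic_on_power[OF b]] by simp
      show ?thesis by (rule holomorphic_on_divide[OF a c]) auto
    qed
    show "uu pp w = A1f w / (3 * (deriv pp w)^2)" if "w \<in> \<Omega>" "deriv pp w \<noteq> 0" for w
      using key[OF that] that(2) unfolding A2f_def by (simp add: field_simps)
  qed
  thus ?thesis by (rule zero_deriv_const[OF conn])
qed

end



lemma const_on_conn:
  assumes "connected S" "open S" "f holomorphic_on S" "\<And>z. z \<in> S \<Longrightarrow> (f has_field_derivative 0) (at z)"
  shows "\<exists>c. \<forall>z\<in>S. f z = c"
proof -
  have "continuous_on S f" using assms(3) by (rule holomorphic_on_imp_continuous_on)
  moreover have "\<forall>x\<in>S - {}. DERIV f x :> 0" using assms(4) by auto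
  ultimately obtain c where "\<And>x. x \<in> S \<Longrightarrow> f x = c"
    using DERIV_zero_connected_constant[OF assms(1,2) finite.emptyI] by blast
  thus ?thesis by blast
qed

lemma part2:
  assumes s1: "sph \<Omega> F1 G1" and s2: "sph \<Omega> F2 G2" and conn: "connected \<Omega>" and ne: "\<Omega> \<noteq> {}"
    and lam: "\<forall>z\<in>\<Omega>. deriv G1 z = lam * deriv F1 z"
    and JJ: "\<forall>z\<in>\<Omega>. jacobian_H F1 G1 z = jacobian_H F2 G2 z"
  shows "\<exists>\<alpha> \<beta>. (\<forall>z\<in>\<Omega>. deriv F2 z = \<alpha> * deriv F1 z \<and> deriv G2 z = \<beta> * deriv F1 z) \<and>
               (norm \<alpha>)^2 - (norm \<beta>)^2 = 1 - (norm lam)^2 \<and> 1 - (norm lam)^2 > 0"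
proof -
  interpret K1: sph \<Omega> F1 G1 by (rule s1)
  interpret K2: sph \<Omega> F2 G2 by (rule s2)
  have c1: "\<And>z. z \<in> \<Omega> \<Longrightarrow> dilatation F1 G1 z = lam" using lam K1.F1_nz by (simp add: dilatation_def)
  have P1: "\<And>z. z \<in> \<Omega> \<Longrightarrow> pre_schwarzian_H F1 G1 z = deriv (deriv F1) z / deriv F1 z"
    by (rule K1.const_P[OF c1])
  have PP: "pre_schwarzian_H F1 G1 z = pre_schwarzian_H F2 G2 z" if z: "z \<in> \<Omega>" for z
    unfolding pre_schwarzian_H_def by (rule wirtinger_cong[OF K1.op z]) (use JJ in auto)
  have E: "deriv (deriv F2) z / deriv F2 z - deriv (dilatation F2 G2) z * uu (dilatation F2 G2) z
      = deriv (deriv F1) z / deriv F1 z" if z: "z \<in> \<Omega>" for z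
    using P1[OF z] PP[OF z] K2.PREp[OF z] by simp
  define U where "U = \<Omega> \<inter> {w. deriv (dilatation F2 G2) w \<noteq> 0}"
  have d0: "deriv (dilatation F2 G2) z = 0" if z: "z \<in> \<Omega>" for z
  proof (rule K2.deriv_zero_by_nothol[OF _ _ z])
    have a: "(\<lambda>w. deriv (deriv F2) w / deriv F2 w - deriv (deriv F1) w / deriv F1 w) holomorphic_on U"
    proof -
      have sub: "U \<subseteq> \<Omega>" unfolding U_def by auto
      have x1: "deriv F1 holomorphic_on U" "deriv (deriv F1) holomorphic_on U"
        "deriv F2 holomorphic_on U" "deriv (deriv F2) holomorphic_on U"
        using K1.hol1 K1.hol2 K2.hol1 K2.hol2 holomorphic_on_subset[OF _ sub] by auto
      have n1: "\<And>w. w \<in> U \<Longrightarrow> deriv F1 w \<noteq> 0" "\<And>w. w \<in> U \<Longrightarrow> deriv F2 w \<noteq> 0"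
        using K1.F1_nz K2.F1_nz sub by auto
      show ?thesis
        by (rule holomorphic_on_diff[OF holomorphic_on_divide[OF x1(4) x1(3) n1(2)] holomorphic_on_divide[OF x1(2) x1(1) n1(1)]])
    qed
    have b: "deriv (dilatation F2 G2) holomorphic_on U" using K2.p1_hol unfolding U_def by (rule holomorphic_on_subset) auto
    show "(\<lambda>w. (deriv (deriv F2) w / deriv F2 w - deriv (deriv F1) w / deriv F1 w) / deriv (dilatation F2 G2) w)
       holomorphic_on \<Omega> \<inter> {w. deriv (dilatation F2 G2) w \<noteq> 0}"
      using holomorphic_on_divide[OF a b] unfolding U_def by auto
    show "uu (dilatation F2 G2) w = (deriv (deriv F2) w / deriv F2 w - deriv (deriv F1) w / deriv F1 w) / deriv (dilatation F2 G2) w"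
      if "w \<in> \<Omega>" "deriv (dilatation F2 G2) w \<noteq> 0" for w
      using E[OF that(1)] that(2) by (simp add: field_simps)
  qed
  obtain \<beta>0 where b0: "\<forall>z\<in>\<Omega>. dilatation F2 G2 z = \<beta>0" using K2.zero_deriv_const[OF conn d0] by blast
  have Q: "deriv (deriv F2) z / deriv F2 z = deriv (deriv F1) z / deriv F1 z" if z: "z \<in> \<Omega>" for z
    using E[OF z] d0[OF z] by simp
  have hh: "(\<lambda>w. deriv F2 w / deriv F1 w) holomorphic_on \<Omega>"
    by (rule holomorphic_on_divide[OF K2.hol1(1) K1.hol1(1) K1.F1_nz])
  have hd: "((\<lambda>w. deriv F2 w / deriv F1 w) has_field_derivative 0) (at z)" if z: "z \<in> \<Omega>" for z
  proof -
    have "((\<lambda>w. deriv F2 w / deriv F1 w) has_field_derivative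
      (deriv (deriv F2) z * deriv F1 z - deriv F2 z * deriv (deriv F1) z) / (deriv F1 z * deriv F1 z)) (at z)"
      by (rule DERIV_divide[OF K2.D1(1)[OF z] K1.D1(1)[OF z] K1.F1_nz[OF z]])
    moreover have "deriv (deriv F2) z * deriv F1 z - deriv F2 z * deriv (deriv F1) z = 0"
      using Q[OF z] K1.F1_nz[OF z] K2.F1_nz[OF z] by (simp add: field_simps)
    ultimately show ?thesis by simp
  qed
  obtain \<alpha> where al: "\<forall>z\<in>\<Omega>. deriv F2 z / deriv F1 z = \<alpha>"
    using const_on_conn[OF conn K1.op hh hd] by blast
  have F2e: "deriv F2 z = \<alpha> * deriv F1 z" if z: "z \<in> \<Omega>" for z
    using al z K1.F1_nz[OF z] by (auto simp: field_simps)
  have G2e: "deriv G2 z = (\<beta>0 * \<alpha>) * deriv F1 z" if z: "z \<in> \<Omega>" for z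
    using K2.G1[OF z] b0 z F2e[OF z] by simp
  obtain z0 where z0: "z0 \<in> \<Omega>" using ne by blast
  define t where "t = (norm (deriv F1 z0))^2"
  have tpos: "t > 0" unfolding t_def using K1.F1_nz[OF z0] by simp
  have J1: "jacobian_H F1 G1 z0 = t * (1 - (norm lam)^2)"
    unfolding jacobian_H_def t_def using lam z0 by (simp add: norm_mult power_mult_distrib algebra_simps)
  have J2: "jacobian_H F2 G2 z0 = t * ((norm \<alpha>)^2 - (norm (\<beta>0 * \<alpha>))^2)"
    unfolding jacobian_H_def t_def using F2e[OF z0] G2e[OF z0]
    by (simp add: norm_mult power_mult_distrib algebra_simps)
  have "t * ((norm \<alpha>)^2 - (norm (\<beta>0 * \<alpha>))^2) = t * (1 - (norm lam)^2)"
    using J1 J2 JJ z0 by simp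
  hence eq: "(norm \<alpha>)^2 - (norm (\<beta>0 * \<alpha>))^2 = 1 - (norm lam)^2" using tpos by simp
  have "t * (1 - (norm lam)^2) > 0" using J1 K1.Jpos[OF z0] by simp
  hence pos: "1 - (norm lam)^2 > 0" using tpos by (simp add: zero_less_mult_iff)
  show ?thesis using F2e G2e eq pos by blast
qed



lemma R_zero: fixes f1 f2 A B X :: complex
  assumes "f1 \<noteq> 0" "f2 \<noteq> 0"
  defines "a1 \<equiv> A * f1" and "a2 \<equiv> B * f2" and "b1 \<equiv> f1 * (X + 3/2 * A^2)" and "b2 \<equiv> f2 * (X + 3/2 * B^2)"
  defines "\<psi> \<equiv> (a1 * f2 - f1 * a2) / (f2 * f2)"
  defines "\<psi>' \<equiv> (b1 * f2 - f1 * b2) / (f2 * f2) - 2 * a2 * (a1 * f2 - f1 * a2) / (f2 * f2 * f2)"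
  shows "\<psi>' * f1 - \<psi>^2 * f2 / 2 - \<psi> * a1 = 0"
proof -
  define r where "r = f1 / f2"
  have p: "\<psi> = r * (A - B)" unfolding \<psi>_def a1_def a2_def r_def using assms(1,2)
    by (simp add: field_simps)
  have p': "\<psi>' = r * (3/2 * (A^2 - B^2) - 2 * B * (A - B))" unfolding \<psi>'_def a1_def a2_def b1_def b2_def r_def using assms(1,2)
    by (simp add: field_simps)
  have rr: "r * r * f2 = r * f1" unfolding r_def using assms(2) by simp
  have q: "(r * (A - B))^2 * f2 = r * f1 * (A - B)^2" unfolding power2_eq_square using rr
    by (metis (no_types, lifting) mult.commute mult.left_commute)
  show ?thesis unfolding p' a1_def p q
    by (simp add: field_simps power2_eq_square algebra_simps)
qed

lemma alg_moeb: fixes f1 a1 b1 f2 a2 b2 g g1 g2 :: complex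
  assumes nz: "f1 \<noteq> 0" "f2 \<noteq> 0" "g \<noteq> 0"
    and hsq: "g * g = f1 / f2"
    and E1: "2 * (g1 * g) = (a1 * f2 - f1 * a2) / (f2 * f2)"
    and E2: "2 * (g2 * g + g1 * g1) = (b1 * f2 - f1 * b2) / (f2 * f2) - 2 * a2 * (a1 * f2 - f1 * a2) / (f2 * f2 * f2)"
    and S: "b1 / f1 - 3/2 * (a1 / f1)^2 = b2 / f2 - 3/2 * (a2 / f2)^2"
  shows "g2 * f1 - g1 * a1 = 0"
proof -
  define \<psi> where "\<psi> = (a1 * f2 - f1 * a2) / (f2 * f2)"
  define \<psi>' where "\<psi>' = (b1 * f2 - f1 * b2) / (f2 * f2) - 2 * a2 * (a1 * f2 - f1 * a2) / (f2 * f2 * f2)"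
  define A where "A = a1 / f1"
  define B where "B = a2 / f2"
  define X where "X = b1 / f1 - 3/2 * A^2"
  have a1: "a1 = A * f1" and a2: "a2 = B * f2" unfolding A_def B_def using nz by auto
  have b1: "b1 = f1 * (X + 3/2 * A^2)" unfolding X_def using nz by (simp add: field_simps)
  have "b2 / f2 = X + 3/2 * B^2" unfolding X_def B_def A_def using S by (simp add: algebra_simps)
  hence b2: "b2 = f2 * (X + 3/2 * B^2)" using nz by (simp add: field_simps)
  have R: "\<psi>' * f1 - \<psi>^2 * f2 / 2 - \<psi> * a1 = 0"
    unfolding \<psi>'_def \<psi>_def a1 a2 b1 b2 by (rule R_zero[OF nz(1,2)])
  have g1e: "g1 * g1 = \<psi>^2 * f2 / (4 * f1)"
  proof -
    have "g1 = \<psi> / (2 * g)" using E1 nz unfolding \<psi>_def by (simp add: field_simps)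
    hence "g1 * g1 = \<psi>^2 / (4 * (g * g))" by (simp add: power2_eq_square)
    thus ?thesis unfolding hsq using nz by (simp add: field_simps)
  qed
  have "2 * g * (g2 * f1 - g1 * a1) = (\<psi>' - 2 * (g1 * g1)) * f1 - \<psi> * a1"
  proof -
    have h1: "2 * g * g2 = \<psi>' - 2 * (g1 * g1)" using E2 unfolding \<psi>'_def by (simp add: algebra_simps)
    have h2: "2 * g * g1 = \<psi>" using E1 unfolding \<psi>_def by (simp add: algebra_simps)
    have "2 * g * (g2 * f1 - g1 * a1) = (2 * g * g2) * f1 - (2 * g * g1) * a1" by (simp add: algebra_simps)
    also have "\<dots> = (\<psi>' - 2 * (g1 * g1)) * f1 - \<psi> * a1" unfolding h1 h2 ..
    finally show ?thesis .
  qed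
  also have "\<dots> = \<psi>' * f1 - \<psi>^2 * f2 / 2 - \<psi> * a1" unfolding g1e using nz by (simp add: field_simps)
  also have "\<dots> = 0" by (rule R)
  finally show ?thesis using nz by simp
qed



lemma moeb:
  assumes op: "open \<Omega>" and sc: "simply_connected \<Omega>" and ne: "\<Omega> \<noteq> {}"
    and hF1: "F1 holomorphic_on \<Omega>" and hF2: "F2 holomorphic_on \<Omega>"
    and nz1: "\<And>z. z \<in> \<Omega> \<Longrightarrow> deriv F1 z \<noteq> 0" and nz2: "\<And>z. z \<in> \<Omega> \<Longrightarrow> deriv F2 z \<noteq> 0"
    and S: "\<And>z. z \<in> \<Omega> \<Longrightarrow> deriv (deriv (deriv F1)) z / deriv F1 z - 3/2 * (deriv (deriv F1) z / deriv F1 z)^2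
              = deriv (deriv (deriv F2)) z / deriv F2 z - 3/2 * (deriv (deriv F2) z / deriv F2 z)^2"
  shows "\<exists>m n s d. m * d - n * s \<noteq> 0 \<and> (\<forall>z\<in>\<Omega>. s * F1 z + d \<noteq> 0) \<and>
           (\<forall>z\<in>\<Omega>. deriv F2 z = deriv (moebius m n s d \<circ> F1) z)"
proof -
  have conn: "connected \<Omega>" using sc by (rule simply_connected_imp_connected)
  define f1 where "f1 = deriv F1"
  define a1 where "a1 = deriv f1"
  define b1 where "b1 = deriv a1"
  define f2 where "f2 = deriv F2"
  define a2 where "a2 = deriv f2"
  define b2 where "b2 = deriv a2"
  have hf1: "f1 holomorphic_on \<Omega>" unfolding f1_def using hF1 op by (rule holomorphic_deriv)
  have ha1: "a1 holomorphic_on \<Omega>" unfolding a1_def using hf1 op by (rule holomorphic_deriv)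
  have hf2: "f2 holomorphic_on \<Omega>" unfolding f2_def using hF2 op by (rule holomorphic_deriv)
  have ha2: "a2 holomorphic_on \<Omega>" unfolding a2_def using hf2 op by (rule holomorphic_deriv)
  have dF1: "\<And>z. z \<in> \<Omega> \<Longrightarrow> (F1 has_field_derivative f1 z) (at z)" unfolding f1_def using hF1 op by (auto intro: holomorphic_derivI)
  have df1: "\<And>z. z \<in> \<Omega> \<Longrightarrow> (f1 has_field_derivative a1 z) (at z)" unfolding a1_def using hf1 op by (auto intro: holomorphic_derivI)
  have da1: "\<And>z. z \<in> \<Omega> \<Longrightarrow> (a1 has_field_derivative b1 z) (at z)" unfolding b1_def using ha1 op by (auto intro: holomorphic_derivI)
  have df2: "\<And>z. z \<in> \<Omega> \<Longrightarrow> (f2 has_field_derivative a2 z) (at z)" unfolding a2_def using hf2 op by (auto intro: holomorphic_derivI)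
  have da2: "\<And>z. z \<in> \<Omega> \<Longrightarrow> (a2 has_field_derivative b2 z) (at z)" unfolding b2_def using ha2 op by (auto intro: holomorphic_derivI)
  have n1: "\<And>z. z \<in> \<Omega> \<Longrightarrow> f1 z \<noteq> 0" and n2: "\<And>z. z \<in> \<Omega> \<Longrightarrow> f2 z \<noteq> 0"
    using nz1 nz2 unfolding f1_def f2_def by auto
  have S': "\<And>z. z \<in> \<Omega> \<Longrightarrow> b1 z / f1 z - 3/2 * (a1 z / f1 z)^2 = b2 z / f2 z - 3/2 * (a2 z / f2 z)^2"
    using S unfolding f1_def a1_def b1_def f2_def a2_def b2_def by simp
  have hphi: "(\<lambda>w. f1 w / f2 w) holomorphic_on \<Omega>" by (rule holomorphic_on_divide[OF hf1 hf2 n2])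
  obtain g where hg: "g holomorphic_on \<Omega>" and gsq: "\<And>z. z \<in> \<Omega> \<Longrightarrow> f1 z / f2 z = (g z)^2"
    using sc hphi n1 n2 unfolding simply_connected_eq_holomorphic_sqrt[OF op] by force
  have gnz: "\<And>z. z \<in> \<Omega> \<Longrightarrow> g z \<noteq> 0" using gsq n1 n2 by force
  define g1 where "g1 = deriv g"
  define g2 where "g2 = deriv g1"
  have hg1: "g1 holomorphic_on \<Omega>" unfolding g1_def using hg op by (rule holomorphic_deriv)
  have dg: "\<And>z. z \<in> \<Omega> \<Longrightarrow> (g has_field_derivative g1 z) (at z)" unfolding g1_def using hg op by (auto intro: holomorphic_derivI)
  have dg1: "\<And>z. z \<in> \<Omega> \<Longrightarrow> (g1 has_field_derivative g2 z) (at z)" unfolding g2_def using hg1 op by (auto intro: holomorphic_derivI)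
  have E1: "g1 z * g z + g1 z * g z = (a1 z * f2 z - f1 z * a2 z) / (f2 z * f2 z)" if z: "z \<in> \<Omega>" for z
  proof -
    note A = DERIV_mult[OF dg[OF z] dg[OF z]]
    have B: "((\<lambda>w. g w * g w) has_field_derivative (a1 z * f2 z - f1 z * a2 z) / (f2 z * f2 z)) (at z)"
      by (rule has_field_derivative_transform_within_open[OF DERIV_divide[OF df1[OF z] df2[OF z] n2[OF z]] op z])
         (simp add: gsq power2_eq_square)
    show ?thesis using DERIV_unique[OF A B] .
  qed
  have key: "g2 z * f1 z - g1 z * a1 z = 0" if z: "z \<in> \<Omega>" for z
  proof -
    note A = DERIV_add[OF DERIV_mult[OF dg1[OF z] dg[OF z]] DERIV_mult[OF dg1[OF z] dg[OF z]]]
    have f2z: "f2 z * f2 z \<noteq> 0" using n2[OF z] by simp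
    note B0 = DERIV_divide[OF DERIV_diff[OF DERIV_mult[OF da1[OF z] df2[OF z]] DERIV_mult[OF df1[OF z] da2[OF z]]]
        DERIV_mult[OF df2[OF z] df2[OF z]] f2z]
    note B = has_field_derivative_transform_within_open[OF B0 op z E1[symmetric]]
    note eq = DERIV_unique[OF A B]
    have E2': "2 * (g2 z * g z + g1 z * g1 z) = ((b1 z * f2 z - f1 z * b2 z) * (f2 z * f2 z)
        - 2 * a2 z * (a1 z * f2 z - f1 z * a2 z) * f2 z) / (f2 z * f2 z * f2 z * f2 z)"
      using eq n2[OF z] by (simp add: field_simps)
    have r: "((b1 z * f2 z - f1 z * b2 z) * (f2 z * f2 z)
        - 2 * a2 z * (a1 z * f2 z - f1 z * a2 z) * f2 z) / (f2 z * f2 z * f2 z * f2 z) =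
        (b1 z * f2 z - f1 z * b2 z) / (f2 z * f2 z)
        - 2 * a2 z * (a1 z * f2 z - f1 z * a2 z) / (f2 z * f2 z * f2 z)"
      using n2[OF z] by (simp add: field_simps)
    have E2: "2 * (g2 z * g z + g1 z * g1 z) = (b1 z * f2 z - f1 z * b2 z) / (f2 z * f2 z)
        - 2 * a2 z * (a1 z * f2 z - f1 z * a2 z) / (f2 z * f2 z * f2 z)"
      using E2' r by simp
    show ?thesis
    proof (rule alg_moeb[OF n1[OF z] n2[OF z] gnz[OF z] _ _ E2 S'[OF z]])
      show "g z * g z = f1 z / f2 z" using gsq[OF z] by (simp add: power2_eq_square)
      show "2 * (g1 z * g z) = (a1 z * f2 z - f1 z * a2 z) / (f2 z * f2 z)" using E1[OF z] by simp
    qed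
  qed
  have hh: "(\<lambda>w. g1 w / f1 w) holomorphic_on \<Omega>" by (rule holomorphic_on_divide[OF hg1 hf1 n1])
  have hd: "((\<lambda>w. g1 w / f1 w) has_field_derivative 0) (at z)" if z: "z \<in> \<Omega>" for z
    using DERIV_divide[OF dg1[OF z] df1[OF z] n1[OF z]] key[OF z] by simp
  obtain s where sdef: "\<forall>z\<in>\<Omega>. g1 z / f1 z = s" using const_on_conn[OF conn op hh hd] by blast
  have hk: "(\<lambda>w. g w - s * F1 w) holomorphic_on \<Omega>" using hg hF1 by (intro holomorphic_intros)
  have kd: "((\<lambda>w. g w - s * F1 w) has_field_derivative 0) (at z)" if z: "z \<in> \<Omega>" for z
  proof -
    have "g1 z = s * f1 z" using sdef z n1[OF z] by (auto simp: field_simps)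
    thus ?thesis using DERIV_diff[OF dg[OF z] DERIV_cmult[OF dF1[OF z], of s]] by simp
  qed
  obtain d where ddef: "\<forall>z\<in>\<Omega>. g z - s * F1 z = d" using const_on_conn[OF conn op hk kd] by blast
  have gl: "g z = s * F1 z + d" if "z \<in> \<Omega>" for z using ddef that by (simp add: algebra_simps)
  have lnz: "s * F1 z + d \<noteq> 0" if "z \<in> \<Omega>" for z using gnz[OF that] gl[OF that] by simp
  have f2e: "f2 z = f1 z / (s * F1 z + d)^2" if z: "z \<in> \<Omega>" for z
    using gsq[OF z] gl[OF z] n1[OF z] n2[OF z] lnz[OF z] by (simp add: field_simps)
  obtain z0 where z0: "z0 \<in> \<Omega>" using ne by blast
  obtain m n where mn: "m * d - n * s = 1"
  proof (cases "d = 0")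
    case True
    hence "s \<noteq> 0" using lnz[OF z0] by auto
    thus ?thesis using that[of 0 "-1/s"] True by simp
  next
    case False
    thus ?thesis using that[of "1/d" 0] by simp
  qed
  have md: "deriv (moebius m n s d \<circ> F1) z = f1 z / (s * F1 z + d)^2" if z: "z \<in> \<Omega>" for z
  proof -
    have meq: "moebius m n s d = (\<lambda>w. (m * w + n) / (s * w + d))" by (rule ext) (simp add: moebius_def)
    have A: "((\<lambda>w. m * w + n) has_field_derivative m) (at (F1 z))" by (auto intro!: derivative_eq_intros)
    have B: "((\<lambda>w. s * w + d) has_field_derivative s) (at (F1 z))" by (auto intro!: derivative_eq_intros)
    have "(moebius m n s d has_field_derivative
        (m * (s * F1 z + d) - (m * F1 z + n) * s) / ((s * F1 z + d) * (s * F1 z + d))) (at (F1 z))"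
      unfolding meq by (rule DERIV_divide[OF A B lnz[OF z]])
    from DERIV_imp_deriv[OF DERIV_chain[OF this dF1[OF z]]]
    have "deriv (moebius m n s d \<circ> F1) z =
        (m * (s * F1 z + d) - (m * F1 z + n) * s) / ((s * F1 z + d) * (s * F1 z + d)) * f1 z" .
    also have "(m * (s * F1 z + d) - (m * F1 z + n) * s) = m * d - n * s" by (simp add: algebra_simps)
    finally show ?thesis using mn by (simp add: power2_eq_square o_def)
  qed
  show ?thesis
  proof (intro exI conjI ballI)
    show "m * d - n * s \<noteq> 0" using mn by simp
    show "s * F1 z + d \<noteq> 0" if "z \<in> \<Omega>" for z using lnz[OF that] .
    show "deriv F2 z = deriv (moebius m n s d \<circ> F1) z" if "z \<in> \<Omega>" for z
      using f2e[OF that] md[OF that] unfolding f2_def by simp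
  qed
qed



lemma part3:
  assumes s1: "sph \<Omega> F1 G1" and s2: "sph \<Omega> F2 G2" and sc: "simply_connected \<Omega>" and ne: "\<Omega> \<noteq> {}"
    and lam: "\<forall>z\<in>\<Omega>. deriv G1 z = lam * deriv F1 z"
    and SS: "\<forall>z\<in>\<Omega>. schwarzian_H F1 G1 z = schwarzian_H F2 G2 z"
  shows "\<exists>c m n s d. norm c < 1 \<and> m * d - n * s \<noteq> 0 \<and>
           (\<forall>z\<in>\<Omega>. s * F1 z + d \<noteq> 0) \<and>
           (\<forall>z\<in>\<Omega>. deriv F2 z = deriv (moebius m n s d \<circ> F1) z \<and>
                    deriv G2 z = c * deriv (moebius m n s d \<circ> F1) z)"
proof -
  interpret K1: sph \<Omega> F1 G1 by (rule s1)
  interpret K2: sph \<Omega> F2 G2 by (rule s2)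
  have conn: "connected \<Omega>" using sc by (rule simply_connected_imp_connected)
  have c1: "\<And>z. z \<in> \<Omega> \<Longrightarrow> dilatation F1 G1 z = lam" using lam K1.F1_nz by (simp add: dilatation_def)
  have "schwarzian_H F1 G1 holomorphic_on \<Omega>" by (rule K1.part1b[OF c1])
  hence "schwarzian_H F2 G2 holomorphic_on \<Omega>" by (rule holomorphic_transform) (use SS in auto)
  then obtain c where c2: "\<forall>z\<in>\<Omega>. dilatation F2 G2 z = c" using K2.part1a[OF conn] by blast
  obtain z0 where z0: "z0 \<in> \<Omega>" using ne by blast
  have cn: "norm c < 1" using K2.p_lt1[OF z0] c2 z0 by simp
  have SA: "K1.A0f z = K2.A0f z" if z: "z \<in> \<Omega>" for z
    using K1.const_S[OF c1 z] K2.const_S[of c z] c2 z SS by simp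
  obtain m n s d where mnsd: "m * d - n * s \<noteq> 0" "\<forall>z\<in>\<Omega>. s * F1 z + d \<noteq> 0"
      "\<forall>z\<in>\<Omega>. deriv F2 z = deriv (moebius m n s d \<circ> F1) z"
    using moeb[OF K1.op sc ne K1.holF K2.holF K1.F1_nz K2.F1_nz] SA
    unfolding K1.A0f_def K2.A0f_def by blast
  have "deriv G2 z = c * deriv (moebius m n s d \<circ> F1) z" if z: "z \<in> \<Omega>" for z
    using K2.G1[OF z] c2 z mnsd(3) by simp
  thus ?thesis using cn mnsd by blast
qed

theorem mainTheorem2:
  fixes \<Omega> :: "complex set" and F1 G1 F2 G2 :: "complex \<Rightarrow> complex"
  assumes dom: "open \<Omega>" "connected \<Omega>" "simply_connected \<Omega>" "\<Omega> \<noteq> {}"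
    and K1: "sense_preserving_harmonic \<Omega> F1 G1"
    and K2: "sense_preserving_harmonic \<Omega> F2 G2"
  shows
    "(schwarzian_H F1 G1 holomorphic_on \<Omega> \<longleftrightarrow>
        (\<exists>c. \<forall>z\<in>\<Omega>. dilatation F1 G1 z = c))
     \<and>
     (\<forall>lam. (\<forall>z\<in>\<Omega>. deriv G1 z = lam * deriv F1 z) \<longrightarrow>
        (\<forall>z\<in>\<Omega>. jacobian_H F1 G1 z = jacobian_H F2 G2 z) \<longrightarrow>
        (\<exists>\<alpha> \<beta>. (\<forall>z\<in>\<Omega>. deriv F2 z = \<alpha> * deriv F1 z \<and> deriv G2 z = \<beta> * deriv F1 z) \<and>
               (norm \<alpha>)^2 - (norm \<beta>)^2 = 1 - (norm lam)^2 \<and> 1 - (norm lam)^2 > 0))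
     \<and>
     (\<forall>lam. (\<forall>z\<in>\<Omega>. deriv G1 z = lam * deriv F1 z) \<longrightarrow>
        (\<forall>z\<in>\<Omega>. schwarzian_H F1 G1 z = schwarzian_H F2 G2 z) \<longrightarrow>
        (\<exists>c m n s d. norm c < 1 \<and> m * d - n * s \<noteq> 0 \<and>
           (\<forall>z\<in>\<Omega>. s * F1 z + d \<noteq> 0) \<and>
           (\<forall>z\<in>\<Omega>. deriv F2 z = deriv (moebius m n s d \<circ> F1) z \<and>
                    deriv G2 z = c * deriv (moebius m n s d \<circ> F1) z)))"
proof -
  have s1: "sph \<Omega> F1 G1" by unfold_locales (rule dom(1), rule K1)
  have s2: "sph \<Omega> F2 G2" by unfold_locales (rule dom(1), rule K2)
  interpret X1: sph \<Omega> F1 G1 by (rule s1)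
  have i: "schwarzian_H F1 G1 holomorphic_on \<Omega> \<longleftrightarrow> (\<exists>c. \<forall>z\<in>\<Omega>. dilatation F1 G1 z = c)"
    using X1.part1a[OF dom(2)] X1.part1b by blast
  show ?thesis
    using i part2[OF s1 s2 dom(2) dom(4)] part3[OF s1 s2 dom(3) dom(4)] by blast
qed


end
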